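(* Let $S$ be a regular semigroup and let $\phi:\mathcal G\to S^1$ be a skeleton mapping on $X$. Then for every $g\in\mathcal G_i$ with $i\ge2$, the elements $g^{\phi,l}$ and $g^{\phi,r}$ are idempotents of $S$.
   Context: Let $X$ be a nonempty set and $X'=\{x':x\in X\}$ a disjoint copy of $X$; let $1$ be a new symbol and $A=X\cup X'\cup\{1\}$ (the anchors), with the involution $1'=1$, $(x)'=x'$, $(x')'=x$ for $x\in X$. For a 5-tuple $g$ write $g=(g^l,g^{la},g^c,g^{ra},g^r)$ (left entry, left anchor, middle entry, right anchor, right entry); the notation iterates, e.g. for $s\in\{l,r\}$, $g^{ls}$ is the $s$-entry of $g^l$ and $g^{lsa}$ is the $s$-anchor of $g^l$. Define $\mathcal G_0=\{1\}$; $\mathcal G_{1,e}=\{g_{xx'}:x\in X\}$ where $g_{xx'}=(1,1,xx',x',1)$ (the middle entry is a formal symbol), and $\mathcal G_{1,d}=\emptyset$. For $i\ge 2$: $\mathcal G_{i,e}=\{(g,(g^{la})',g^l,(g^{ra})',g),\ (g,(g^{ra})',g^l,(g^{la})',g) : g\in\mathcal G_{i-1,e}\}$, and $\mathcal G_{i,d}$ is the set of all $g\in\mathcal G_{i-1}\times A\times\mathcal G_{i-2}\times A\times\mathcal G_{i-1}$ such that $g^l\neq g^r$, $(g^c,g^{la})=(g^{ls},(g^{lsa})')$ for some $s\in\{l,r\}$, and $(g^c,g^{ra})=(g^{rt},(g^{rta})')$ for some $t\in\{l,r\}$; here $\mathcal G_i=\mathcal G_{i,d}\cup\mathcal G_{i,e}$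 for $i\ge1$. Put $\mathcal G^5=\bigcup_{i\ge1}\mathcal G_i$, $\mathcal G=\mathcal G^5\cup A$ (the symbol $1$ is used both as an anchor and as an element of $\mathcal G_0$). $S^1$ denotes $S$ with an identity adjoined if necessary. For a mapping $\phi:\mathcal G\to S^1$ and $g\in\mathcal G^5$ of height $\ge2$ put $g^{\phi,l}=(g^c\phi)((g^{la})'\phi)(g^l\phi)(g^{la}\phi)$ and $g^{\phi,r}=((g^{ra})'\phi)(g^r\phi)(g^{ra}\phi)(g^c\phi)$. For elements $a,b$ of a regular semigroup $T$, the sandwich set is $S(a,b)=\{h\in E(T): (bb')h=h=h(a'a),\ (a'a)h(bb')=(a'a)(bb')\}$ for any inverses $a'$ of $a$, $b'$ of $b$ (independent of the choice). A skeleton mapping (on $X$) is a mapping $\phi:\mathcal G\to S^1$, $S$ a regular semigroup, such that: (i) for every $x\in X$, $x\phi\in S$, $x'\phi$ is an inverse of $x\phi$ (i.e. $(x\phi)(x'\phi)(x\phi)=x\phi$ and $(x'\phi)(x\phi)(x'\phi)=x'\phi$), and $g_{xx'}\phi=(x\phi)(x'\phi)$; (ii) $(1\phi)(a\phi)=a\phi=(a\phi)(1\phi)$ for all $a\in A$; (iii) $g\phi\in S(g^{\phi,r},g^{\phi,l})$ for every $g\in\mathcal G_i$ with $i\ge2$. *)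

theory Defs
  imports Main
begin

text \<open>Anchors: One is the symbol 1, Pos x is x, Neg x is x'.\<close>
datatype 'x anc = One | Pos 'x | Neg 'x

fun aprime :: "'x anc \<Rightarrow> 'x anc" where
  "aprime One = One"
| "aprime (Pos x) = Neg x"
| "aprime (Neg x) = Pos x"

definition anchors :: "'x set \<Rightarrow> 'x anc set" where
  "anchors X = {One} \<union> Pos ` X \<union> Neg ` X"

text \<open>Elements: anchors (the element 1 of G_0 is Anc One), the formal symbol xx'
  (XX x, only used as middle entry of g_xx'), and 5-tuples
  (left entry, left anchor, middle entry, right anchor, right entry).\<close>
datatype 'x gel =
    Anc "'x anc"
  | XX 'x
  | Tup (gl: "'x gel") (gla: "'x anc") (gc: "'x gel") (gra: "'x anc") (gr: "'x gel")

definition gxx :: "'x \<Rightarrow> 'x gel" where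
  "gxx x = Tup (Anc One) One (XX x) (Neg x) (Anc One)"

fun Ge :: "'x set \<Rightarrow> nat \<Rightarrow> 'x gel set" where
  "Ge X 0 = {}"
| "Ge X (Suc 0) = gxx ` X"
| "Ge X (Suc (Suc n)) =
     (\<lambda>g. Tup g (aprime (gla g)) (gl g) (aprime (gra g)) g) ` Ge X (Suc n)
   \<union> (\<lambda>g. Tup g (aprime (gra g)) (gl g) (aprime (gla g)) g) ` Ge X (Suc n)"

text \<open>Gi X i is G_i (G_0 = {1}, G_1 = G_{1,e}, G_i = G_{i,d} \<union> G_{i,e} for i \<ge> 2).\<close>
fun Gi :: "'x set \<Rightarrow> nat \<Rightarrow> 'x gel set" where
  "Gi X 0 = {Anc One}"
| "Gi X (Suc 0) = Ge X (Suc 0)"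
| "Gi X (Suc (Suc n)) = Ge X (Suc (Suc n)) \<union>
     {g. \<exists>l a c b r. g = Tup l a c b r \<and>
          l \<in> Gi X (Suc n) \<and> a \<in> anchors X \<and> c \<in> Gi X n \<and> b \<in> anchors X \<and>
          r \<in> Gi X (Suc n) \<and> l \<noteq> r \<and>
          ((c = gl l \<and> a = aprime (gla l)) \<or> (c = gr l \<and> a = aprime (gra l))) \<and>
          ((c = gl r \<and> b = aprime (gla r)) \<or> (c = gr r \<and> b = aprime (gra r)))}"

text \<open>S is the whole carrier of a type 'a with an associative multiplication;
  S^1 is modelled as 'a option, None being the adjoined identity.\<close>
definition regular_sg :: "'a::semigroup_mult itself \<Rightarrow> bool" where
  "regular_sg _ \<longleftrightarrow> (\<forall>a::'a. \<exists>b. a * b * a = a)"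

fun m1 :: "'a::semigroup_mult option \<Rightarrow> 'a option \<Rightarrow> 'a option" where
  "m1 None y = y"
| "m1 x None = x"
| "m1 (Some a) (Some b) = Some (a * b)"

definition is_inverse1 :: "'a::semigroup_mult option \<Rightarrow> 'a option \<Rightarrow> bool" where
  "is_inverse1 b a \<longleftrightarrow> m1 (m1 a b) a = a \<and> m1 (m1 b a) b = b"

definition idem :: "'a::semigroup_mult option \<Rightarrow> bool" where
  "idem h \<longleftrightarrow> (\<exists>e. h = Some e \<and> e * e = e)"

text \<open>Sandwich set S(a,b) (with inverses a', b'; independent of the choice).\<close>
definition in_sandwich :: "'a::semigroup_mult option \<Rightarrow> 'a option \<Rightarrow> 'a option \<Rightarrow> bool" where
  "in_sandwich h a b \<longleftrightarrow> idem h \<and>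
     (\<exists>a' b'. is_inverse1 a' a \<and> is_inverse1 b' b \<and>
        m1 (m1 b b') h = h \<and> h = m1 h (m1 a' a) \<and>
        m1 (m1 (m1 a' a) h) (m1 b b') = m1 (m1 a' a) (m1 b b'))"

definition phiL :: "('x gel \<Rightarrow> 'a::semigroup_mult option) \<Rightarrow> 'x gel \<Rightarrow> 'a option" where
  "phiL \<phi> g = m1 (m1 (m1 (\<phi> (gc g)) (\<phi> (Anc (aprime (gla g))))) (\<phi> (gl g))) (\<phi> (Anc (gla g)))"

definition phiR :: "('x gel \<Rightarrow> 'a::semigroup_mult option) \<Rightarrow> 'x gel \<Rightarrow> 'a option" where
  "phiR \<phi> g = m1 (m1 (m1 (\<phi> (Anc (aprime (gra g)))) (\<phi> (gr g))) (\<phi> (Anc (gra g)))) (\<phi> (gc g))"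

definition skeleton :: "'x set \<Rightarrow> ('x gel \<Rightarrow> 'a::semigroup_mult option) \<Rightarrow> bool" where
  "skeleton X \<phi> \<longleftrightarrow>
     (\<forall>x\<in>X. \<phi> (Anc (Pos x)) \<noteq> None \<and> \<phi> (Anc (Neg x)) \<noteq> None \<and>
        is_inverse1 (\<phi> (Anc (Neg x))) (\<phi> (Anc (Pos x))) \<and>
        \<phi> (gxx x) = m1 (\<phi> (Anc (Pos x))) (\<phi> (Anc (Neg x)))) \<and>
     (\<forall>a\<in>anchors X. m1 (\<phi> (Anc One)) (\<phi> (Anc a)) = \<phi> (Anc a) \<and>
        m1 (\<phi> (Anc a)) (\<phi> (Anc One)) = \<phi> (Anc a)) \<and>
     (\<forall>i\<ge>2. \<forall>g\<in>Gi X i. in_sandwich (\<phi> g) (phiR \<phi> g) (phiL \<phi> g))"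

end

theory Submission
  imports Defs
begin

notation m1 (infixl "\<cdot>" 70)

lemma m1_assoc: "(a \<cdot> b) \<cdot> c = a \<cdot> (b \<cdot> c)"
  by (cases a; cases b; cases c) (auto simp: mult.assoc)

lemma m1_None_right[simp]: "x \<cdot> None = x"
  by (cases x) auto

lemma m1_None_iff: "(x \<cdot> y = None) \<longleftrightarrow> x = None \<and> y = None"
  by (cases x; cases y) auto

lemma idemI: "x \<cdot> x = x \<Longrightarrow> x \<noteq> None \<Longrightarrow> idem x"
  by (cases x) (auto simp: idem_def)

lemma idemD: "idem x \<Longrightarrow> x \<cdot> x = x \<and> x \<noteq> None"
  by (auto simp: idem_def)

lemma aprime_aprime[simp]: "aprime (aprime a) = a"
  by (cases a) auto

lemma sq: "e \<cdot> (V \<cdot> U) \<cdot> e = e \<Longrightarrow> (U \<cdot> e \<cdot> V) \<cdot> (U \<cdot> e \<cdot> V) = U \<cdot> e \<cdot> V"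
proof -
  assume h: "e \<cdot> (V \<cdot> U) \<cdot> e = e"
  have "(U \<cdot> e \<cdot> V) \<cdot> (U \<cdot> e \<cdot> V) = U \<cdot> (e \<cdot> (V \<cdot> U) \<cdot> e) \<cdot> V"
    by (simp add: m1_assoc)
  also have "\<dots> = U \<cdot> e \<cdot> V" using h by simp
  finally show ?thesis .
qed

lemma core:
  assumes ee: "e \<cdot> e = e" and Le: "L \<cdot> e = e" and eR: "e \<cdot> R = e" and cc: "c \<cdot> c = c"
    and L: "L = c \<cdot> Z" and R: "R = Y \<cdot> c"
  shows "e \<cdot> Z \<cdot> e = e" "e \<cdot> Y \<cdot> e = e"
proof -
  have ec: "e \<cdot> c = e"
  proof -
    have "e \<cdot> c = (e \<cdot> R) \<cdot> c" using eR by simp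
    also have "\<dots> = e \<cdot> Y \<cdot> (c \<cdot> c)" using R by (simp add: m1_assoc)
    also have "\<dots> = e" using cc eR R by (simp add: m1_assoc)
    finally show ?thesis .
  qed
  have ce: "c \<cdot> e = e"
  proof -
    have "c \<cdot> e = c \<cdot> (L \<cdot> e)" using Le by simp
    also have "\<dots> = (c \<cdot> c) \<cdot> Z \<cdot> e" using L by (simp add: m1_assoc)
    also have "\<dots> = e" using cc Le L by (simp add: m1_assoc)
    finally show ?thesis .
  qed
  have "e \<cdot> Z \<cdot> e = (e \<cdot> c) \<cdot> Z \<cdot> e" using ec by simp
  also have "\<dots> = e \<cdot> (L \<cdot> e)" using L by (simp add: m1_assoc)
  also have "\<dots> = e" using Le ee by simp
  finally show "e \<cdot> Z \<cdot> e = e" .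
  have "e \<cdot> Y \<cdot> e = e \<cdot> Y \<cdot> (c \<cdot> e)" using ce by simp
  also have "\<dots> = (e \<cdot> R) \<cdot> e" using R by (simp add: m1_assoc)
  also have "\<dots> = e" using eR ee by simp
  finally show "e \<cdot> Y \<cdot> e = e" .
qed

definition goodh :: "('x gel \<Rightarrow> 'a::semigroup_mult option) \<Rightarrow> 'x gel \<Rightarrow> bool" where
  "goodh \<phi> h \<longleftrightarrow>
    idem (\<phi> (gl h) \<cdot> \<phi> (Anc (gla h)) \<cdot> \<phi> h \<cdot> \<phi> (Anc (aprime (gla h)))) \<and>
    idem (\<phi> (gr h) \<cdot> \<phi> (Anc (gra h)) \<cdot> \<phi> h \<cdot> \<phi> (Anc (aprime (gra h)))) \<and>
    idem (\<phi> (Anc (gla h)) \<cdot> \<phi> h \<cdot> \<phi> (Anc (aprime (gla h))) \<cdot> \<phi> (gl h)) \<and>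
    idem (\<phi> (Anc (gra h)) \<cdot> \<phi> h \<cdot> \<phi> (Anc (aprime (gra h))) \<cdot> \<phi> (gr h))"

lemma goodI:
  assumes "\<phi> h \<noteq> None"
    and Z: "\<phi> h \<cdot> (\<phi> (Anc (aprime (gla h))) \<cdot> \<phi> (gl h) \<cdot> \<phi> (Anc (gla h))) \<cdot> \<phi> h = \<phi> h"
    and Y: "\<phi> h \<cdot> (\<phi> (Anc (aprime (gra h))) \<cdot> \<phi> (gr h) \<cdot> \<phi> (Anc (gra h))) \<cdot> \<phi> h = \<phi> h"
  shows "goodh \<phi> h"
proof -
  let ?e = "\<phi> h"
  have a1: "?e \<cdot> (\<phi> (Anc (aprime (gla h))) \<cdot> (\<phi> (gl h) \<cdot> \<phi> (Anc (gla h)))) \<cdot> ?e = ?e"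
    using Z by (simp add: m1_assoc)
  have a2: "?e \<cdot> (\<phi> (Anc (aprime (gra h))) \<cdot> (\<phi> (gr h) \<cdot> \<phi> (Anc (gra h)))) \<cdot> ?e = ?e"
    using Y by (simp add: m1_assoc)
  have a3: "?e \<cdot> ((\<phi> (Anc (aprime (gla h))) \<cdot> \<phi> (gl h)) \<cdot> \<phi> (Anc (gla h))) \<cdot> ?e = ?e"
    using Z by (simp add: m1_assoc)
  have a4: "?e \<cdot> ((\<phi> (Anc (aprime (gra h))) \<cdot> \<phi> (gr h)) \<cdot> \<phi> (Anc (gra h))) \<cdot> ?e = ?e"
    using Y by (simp add: m1_assoc)
  note s1 = sq[OF a1] and s2 = sq[OF a2] and s3 = sq[OF a3] and s4 = sq[OF a4]
  show ?thesis unfolding goodh_def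
    apply (intro conjI idemI)
    using s1 s2 s3 s4 assms(1) by (simp_all add: m1_assoc m1_None_iff)
qed

lemma Ge_props: "h \<in> Ge X (Suc n) \<Longrightarrow> gl h = gr h \<and> gl h \<in> Gi X n \<and> h \<in> Gi X (Suc n)"
proof (induction n arbitrary: h)
  case 0
  then show ?case by (auto simp: gxx_def)
next
  case (Suc n)
  then show ?case by auto
qed

lemma shape:
  assumes "g \<in> Gi X (Suc (Suc n))"
  shows "\<exists>l a c b r. g = Tup l a c b r \<and> l \<in> Gi X (Suc n) \<and> r \<in> Gi X (Suc n) \<and> c \<in> Gi X n \<and>
     ((c = gl l \<and> a = aprime (gla l)) \<or> (c = gr l \<and> a = aprime (gra l))) \<and>
     ((c = gl r \<and> b = aprime (gla r)) \<or> (c = gr r \<and> b = aprime (gra r)))"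
proof -
  have "g \<in> Ge X (Suc (Suc n)) \<or> g \<notin> Ge X (Suc (Suc n))" by blast
  then show ?thesis
  proof
    assume "g \<in> Ge X (Suc (Suc n))"
    then obtain h where h: "h \<in> Ge X (Suc n)" and
      g: "g = Tup h (aprime (gla h)) (gl h) (aprime (gra h)) h \<or>
          g = Tup h (aprime (gra h)) (gl h) (aprime (gla h)) h" by auto
    from Ge_props[OF h] g show ?thesis by metis
  next
    assume "g \<notin> Ge X (Suc (Suc n))"
    with assms show ?thesis by auto
  qed
qed

lemma idemG:
  assumes sk: "skeleton X \<phi>" and "g \<in> Gi X k"
  shows "\<phi> g \<cdot> \<phi> g = \<phi> g"
proof (cases k)
  case 0
  with assms have "g = Anc One" by simp
  with sk show ?thesis by (auto simp: skeleton_def anchors_def)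
next
  case (Suc m)
  show ?thesis
  proof (cases m)
    case 0
    with Suc assms obtain x where x: "x \<in> X" "g = gxx x" by auto
    with sk have "\<phi> g = \<phi> (Anc (Pos x)) \<cdot> \<phi> (Anc (Neg x))"
      and inv: "is_inverse1 (\<phi> (Anc (Neg x))) (\<phi> (Anc (Pos x)))"
      by (auto simp: skeleton_def)
    then show ?thesis by (simp add: is_inverse1_def m1_assoc)
  next
    case (Suc m')
    have "\<forall>i\<ge>2. \<forall>g\<in>Gi X i. in_sandwich (\<phi> g) (phiR \<phi> g) (phiL \<phi> g)"
      using sk unfolding skeleton_def by blast
    moreover have "k \<ge> 2" using Suc \<open>k = Suc m\<close> by simp
    ultimately have "in_sandwich (\<phi> g) (phiR \<phi> g) (phiL \<phi> g)" using assms(2) by blast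
    then show ?thesis by (auto simp: in_sandwich_def idem_def)
  qed
qed

lemma good_all:
  assumes sk: "skeleton X \<phi>" and h: "h \<in> Gi X (Suc k)"
    and IH: "k \<ge> 1 \<Longrightarrow> idem (phiL \<phi> h) \<and> idem (phiR \<phi> h)"
  shows "goodh \<phi> h"
proof (cases k)
  case 0
  with h obtain x where x: "x \<in> X" "h = gxx x" by auto
  let ?o = "\<phi> (Anc One)" and ?P = "\<phi> (Anc (Pos x))" and ?N = "\<phi> (Anc (Neg x))"
  have an: "One \<in> anchors X" "Pos x \<in> anchors X" "Neg x \<in> anchors X"
    using x by (auto simp: anchors_def)
  have oo: "?o \<cdot> ?o = ?o" and oP: "?o \<cdot> ?P = ?P" and Po: "?P \<cdot> ?o = ?P"
    and oN: "?o \<cdot> ?N = ?N" and No: "?N \<cdot> ?o = ?N"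
    using sk an by (auto simp: skeleton_def)
  have ph: "\<phi> h = ?P \<cdot> ?N" and PnN: "?P \<noteq> None"
    and inv: "is_inverse1 ?N ?P" using sk x by (auto simp: skeleton_def gxx_def)
  have PNP: "?P \<cdot> ?N \<cdot> ?P = ?P" and NPN: "?N \<cdot> ?P \<cdot> ?N = ?N"
    using inv by (auto simp: is_inverse1_def)
  have hs: "gl h = Anc One" "gr h = Anc One" "gla h = One" "gra h = Neg x"
    using x by (auto simp: gxx_def)
  show ?thesis
  proof (rule goodI)
    show "\<phi> h \<noteq> None" using ph PnN by (simp add: m1_None_iff)
    have "?P \<cdot> ?N \<cdot> (?o \<cdot> ?o \<cdot> ?o) \<cdot> (?P \<cdot> ?N) = ?P \<cdot> (?N \<cdot> ?o) \<cdot> ?P \<cdot> ?N"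
      using oo by (simp add: m1_assoc)
    also have "\<dots> = ?P \<cdot> ?N" using No PNP by (simp add: m1_assoc)
    finally show "\<phi> h \<cdot> (\<phi> (Anc (aprime (gla h))) \<cdot> \<phi> (gl h) \<cdot> \<phi> (Anc (gla h))) \<cdot> \<phi> h = \<phi> h"
      using hs ph by simp
    have "?P \<cdot> ?N \<cdot> (?P \<cdot> ?o \<cdot> ?N) \<cdot> (?P \<cdot> ?N) = (?P \<cdot> ?N \<cdot> ?P) \<cdot> ?N \<cdot> ?P \<cdot> ?N"
      using Po by (simp add: m1_assoc)
    also have "\<dots> = ?P \<cdot> ?N" using PNP by (simp add: m1_assoc)
    finally show "\<phi> h \<cdot> (\<phi> (Anc (aprime (gra h))) \<cdot> \<phi> (gr h) \<cdot> \<phi> (Anc (gra h))) \<cdot> \<phi> h = \<phi> h"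
      using hs ph by simp
  qed
next
  case (Suc m)
  then obtain m' where hk: "Suc k = Suc (Suc m)" by simp
  from IH Suc have iL: "idem (phiL \<phi> h)" and iR: "idem (phiR \<phi> h)" by auto
  have "\<forall>i\<ge>2. \<forall>g\<in>Gi X i. in_sandwich (\<phi> g) (phiR \<phi> g) (phiL \<phi> g)"
    using sk unfolding skeleton_def by blast
  then have sw: "in_sandwich (\<phi> h) (phiR \<phi> h) (phiL \<phi> h)" using h hk by (metis Suc_1 Suc_le_mono le_add1 plus_1_eq_Suc)
  have ie: "idem (\<phi> h)" using sw unfolding in_sandwich_def by blast
  then have ee: "\<phi> h \<cdot> \<phi> h = \<phi> h" and enn: "\<phi> h \<noteq> None" using idemD by blast+
  from sw obtain a' b' where
    s1: "phiL \<phi> h \<cdot> b' \<cdot> \<phi> h = \<phi> h" and s2: "\<phi> h = \<phi> h \<cdot> (a' \<cdot> phiR \<phi> h)"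
    unfolding in_sandwich_def by blast
  have LL: "phiL \<phi> h \<cdot> phiL \<phi> h = phiL \<phi> h" using idemD[OF iL] by simp
  have RR: "phiR \<phi> h \<cdot> phiR \<phi> h = phiR \<phi> h" using idemD[OF iR] by simp
  have Le: "phiL \<phi> h \<cdot> \<phi> h = \<phi> h"
  proof -
    have "phiL \<phi> h \<cdot> \<phi> h = (phiL \<phi> h \<cdot> phiL \<phi> h) \<cdot> b' \<cdot> \<phi> h"
      using s1 by (simp add: m1_assoc)
    also have "\<dots> = \<phi> h" using LL s1 by simp
    finally show ?thesis .
  qed
  have eR: "\<phi> h \<cdot> phiR \<phi> h = \<phi> h"
  proof -
    have "\<phi> h \<cdot> phiR \<phi> h = \<phi> h \<cdot> a' \<cdot> (phiR \<phi> h \<cdot> phiR \<phi> h)"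
      using s2 by (metis m1_assoc)
    also have "\<dots> = \<phi> h \<cdot> (a' \<cdot> phiR \<phi> h)" using RR by (simp add: m1_assoc)
    also have "\<dots> = \<phi> h" by (rule s2[symmetric])
    finally show ?thesis .
  qed
  from shape[of h X m] h hk obtain l a c b r where hh: "h = Tup l a c b r" and c: "c \<in> Gi X m"
    by (metis Suc_inject)
  have cc: "\<phi> c \<cdot> \<phi> c = \<phi> c" using idemG[OF sk c] .
  have Ldef: "phiL \<phi> h = \<phi> c \<cdot> (\<phi> (Anc (aprime (gla h))) \<cdot> \<phi> (gl h) \<cdot> \<phi> (Anc (gla h)))"
    unfolding phiL_def hh by (simp only: gel.sel m1_assoc)
  have Rdef: "phiR \<phi> h = (\<phi> (Anc (aprime (gra h))) \<cdot> \<phi> (gr h) \<cdot> \<phi> (Anc (gra h))) \<cdot> \<phi> c"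
    unfolding phiR_def hh by (simp only: gel.sel m1_assoc)
  note co = core[OF ee Le eR cc Ldef Rdef]
  show ?thesis by (rule goodI[of \<phi> h, OF enn co(1) co(2)])
qed

lemma main_ind:
  assumes sk: "skeleton X \<phi>"
  shows "\<forall>g\<in>Gi X (Suc (Suc n)). idem (phiL \<phi> g) \<and> idem (phiR \<phi> g)"
proof (induction n)
  case 0
  show ?case
  proof
    fix g assume g: "g \<in> Gi X (Suc (Suc 0))"
    from shape[OF g] obtain l a c b r where gg: "g = Tup l a c b r"
      and l: "l \<in> Gi X (Suc 0)" and r: "r \<in> Gi X (Suc 0)"
      and dl: "(c = gl l \<and> a = aprime (gla l)) \<or> (c = gr l \<and> a = aprime (gra l))"
      and dr: "(c = gl r \<and> b = aprime (gla r)) \<or> (c = gr r \<and> b = aprime (gra r))" by blast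
    have gl: "goodh \<phi> l" by (rule good_all[OF sk l]) simp
    have gr: "goodh \<phi> r" by (rule good_all[OF sk r]) simp
    show "idem (phiL \<phi> g) \<and> idem (phiR \<phi> g)"
      using dl dr gl gr by (auto simp: gg phiL_def phiR_def goodh_def)
  qed
next
  case (Suc n)
  show ?case
  proof
    fix g assume g: "g \<in> Gi X (Suc (Suc (Suc n)))"
    from shape[OF g] obtain l a c b r where gg: "g = Tup l a c b r"
      and l: "l \<in> Gi X (Suc (Suc n))" and r: "r \<in> Gi X (Suc (Suc n))"
      and dl: "(c = gl l \<and> a = aprime (gla l)) \<or> (c = gr l \<and> a = aprime (gra l))"
      and dr: "(c = gl r \<and> b = aprime (gla r)) \<or> (c = gr r \<and> b = aprime (gra r))" by blast
    have gl: "goodh \<phi> l" by (rule good_all[OF sk l]) (use Suc.IH l in blast)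
    have gr: "goodh \<phi> r" by (rule good_all[OF sk r]) (use Suc.IH r in blast)
    show "idem (phiL \<phi> g) \<and> idem (phiR \<phi> g)"
      using dl dr gl gr by (auto simp: gg phiL_def phiR_def goodh_def)
  qed
qed

theorem lemma6p1:
  fixes X :: "'x set" and \<phi> :: "'x gel \<Rightarrow> 'a::semigroup_mult option"
  assumes "X \<noteq> {}"
    and "regular_sg TYPE('a)"
    and "skeleton X \<phi>"
    and "i \<ge> 2" and "g \<in> Gi X i"
  shows "idem (phiL \<phi> g) \<and> idem (phiR \<phi> g)"
proof -
  obtain n where "i = Suc (Suc n)" using assms(4) by (metis add_2_eq_Suc le_Suc_ex)
  then show ?thesis using main_ind[OF assms(3)] assms(5) by blast
qed

end
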